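(* Let $1<p<\infty$, $\delta\in(\max\{1-\frac1d,1-\frac1p\},1)$, $h\ge0$, $j\in\{1,\dots,d\}$, and let $E\subset(0,\infty)$ be measurable such that for some $C_0>0$ $$h_{\tau(s)}(x,y)\le C_0\,s^{-d/2}e^{|x|^2-|y|^2-\frac{\delta}{4s}Q_s(x,y)},\qquad x,y\in\mathbb{R}^d,\ s\in\tau^{-1}(E).$$ Put $Z(x,y)=\int_E|\partial_{x_j}h_u(x,y)|\frac{du}{\sqrt{u+h}}$. Then: (a) for every $\eta\in(0,1)$ there is $C>0$ with $Z(x,y)\le Ce^{\eta(1-\delta)|x|^2-\eta|y|^2}$ for all $(x,y)\in G_1$ with $\langle x,y\rangle<0$; (b) for every $\eta\in(0,1)$ with $\eta\delta>1-\frac1d$ there is $C>0$ with $Z(x,y)\le C|x+y|^d e^{\eta(1-\frac{\delta}{2})(|x|^2-|y|^2)-\frac{\eta\delta}{2}|x+y||x-y|}$ for all $(x,y)\in G_1$ with $\langle x,y\rangle\ge0$.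
   Context: $d\ge1$. $R$ is a real $d\times d$ skew-adjoint matrix, $B_1=-(I+R)$, $h_u(x,y)=(\pi(1-e^{-2u}))^{-d/2}\exp(-|e^{uB_1}x-y|^2/(1-e^{-2u}))$ for $u>0$. $\tau(s)=\log\frac{1+s}{1-s}$, $s\in(0,1)$ (a bijection onto $(0,\infty)$), and $Q_s(x,y)=|(1+s)x-(1-s)y|^2$. $L_1=\{(x,y):|x-y|\le\min\{1,|x+y|^{-1}\}\}$ and $G_1=(\mathbb{R}^d\times\mathbb{R}^d)\setminus L_1$. *)

theory Defs
  imports "HOL-Analysis.Analysis"
begin

fun matpow :: "real^'n^'n \<Rightarrow> nat \<Rightarrow> real^'n^'n" where
  "matpow A 0 = mat 1"
| "matpow A (Suc k) = A ** matpow A k"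

definition mexp :: "real^'n^'n \<Rightarrow> real^'n^'n" where
  "mexp A = (\<Sum>k. (1 / fact k) *\<^sub>R matpow A k)"

definition B1 :: "real^'n^'n \<Rightarrow> real^'n^'n" where
  "B1 R = - (mat 1 + R)"

text \<open>Kernel h_u(x,y), for u > 0, with d = CARD('n).\<close>
definition hker :: "real^'n^'n \<Rightarrow> real \<Rightarrow> real^'n \<Rightarrow> real^'n \<Rightarrow> real" where
  "hker R u x y =
     (pi * (1 - exp (-2*u))) powr (- real CARD('n) / 2) *
     exp (- (norm (mexp (u *\<^sub>R B1 R) *v x - y))\<^sup>2 / (1 - exp (-2*u)))"

definition dhker :: "real^'n^'n \<Rightarrow> 'n \<Rightarrow> real \<Rightarrow> real^'n \<Rightarrow> real^'n \<Rightarrow> real" where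
  "dhker R j u x y = deriv (\<lambda>t. hker R u (x + t *\<^sub>R axis j 1) y) 0"

definition tau :: "real \<Rightarrow> real" where
  "tau s = ln ((1 + s) / (1 - s))"

definition Qs :: "real \<Rightarrow> real^'n \<Rightarrow> real^'n \<Rightarrow> real" where
  "Qs s x y = (norm ((1 + s) *\<^sub>R x - (1 - s) *\<^sub>R y))\<^sup>2"

text \<open>L_1 = {|x-y| <= min(1, |x+y|^{-1})}, written without division
  (|x+y|^{-1} = infinity when x+y = 0); G_1 is its complement.\<close>
definition L1 :: "((real^'n) \<times> (real^'n)) set" where
  "L1 = {(x, y). norm (x - y) \<le> 1 \<and> norm (x - y) * norm (x + y) \<le> 1}"

definition G1 :: "((real^'n) \<times> (real^'n)) set" where
  "G1 = UNIV - L1"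

definition Zfun :: "real^'n^'n \<Rightarrow> 'n \<Rightarrow> real set \<Rightarrow> real \<Rightarrow> real^'n \<Rightarrow> real^'n \<Rightarrow> ennreal" where
  "Zfun R j E h x y =
     (\<integral>\<^sup>+ u \<in> E. ennreal (\<bar>dhker R j u x y\<bar> / sqrt (u + h)) \<partial>lebesgue)"

end

theory Submission
  imports Defs
begin

lemma mv_neg: "((- A) :: real^'n^'n) *v x = - (A *v x)"
  by (simp add: matrix_vector_mult_def vec_eq_iff sum_negf)

lemma mv_bounded: obtains K :: real where "K > 0" "\<And>w. norm ((A::real^'n^'n) *v w) \<le> K * norm w"
proof -
  have "bounded_linear (\<lambda>w. A *v w)"
    by (simp add: linear_conv_bounded_linear matrix_vector_mul_linear)
  then show ?thesis using bounded_linear.pos_bounded that by (metis mult.commute)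
qed

lemma matpow_mv_Suc: "matpow A (Suc k) *v v = A *v (matpow A k *v v)"
  by (simp add: matrix_vector_mul_assoc)

lemma matpow_scale: "matpow (c *\<^sub>R A) k = c^k *\<^sub>R matpow A k"
  by (induction k) (auto simp: matrix_scalar_ac scalar_matrix_assoc mult.commute)

lemma matpow_mv_norm:
  assumes "\<And>w. norm ((A::real^'n^'n) *v w) \<le> K * norm w" "K \<ge> 0"
  shows "norm (matpow A k *v v) \<le> K^k * norm v"
proof (induction k)
  case 0 then show ?case by simp
next
  case (Suc k)
  have "norm (matpow A (Suc k) *v v) \<le> K * norm (matpow A k *v v)"
    using assms(1) by (simp add: matrix_vector_mul_assoc[symmetric])
  also have "\<dots> \<le> K * (K^k * norm v)" using Suc assms(2) by (simp add: mult_left_mono)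
  finally show ?case by (simp add: mult.assoc)
qed

lemma mat_norm_le: "norm (M::real^'n^'n) \<le> (\<Sum>l\<in>UNIV. real CARD('n) * norm (M *v axis l 1))"
proof -
  have "norm M \<le> (\<Sum>i\<in>UNIV. norm (M $ i))" by (simp add: norm_vec_def L2_set_le_sum)
  also have "\<dots> \<le> (\<Sum>i\<in>(UNIV::'n set). (\<Sum>l\<in>UNIV. norm (M *v axis l 1)))"
  proof (rule sum_mono)
    fix i
    have "norm (M $ i) \<le> (\<Sum>l\<in>UNIV. \<bar>M $ i $ l\<bar>)" by (rule norm_le_l1_cart)
    also have "\<dots> \<le> (\<Sum>l\<in>UNIV. norm (M *v axis l 1))"
    proof (rule sum_mono)
      fix l
      have "M $ i $ l = (M *v axis l 1) $ i"
        by (simp add: matrix_vector_mult_def axis_def if_distrib cong: if_cong)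
      then show "\<bar>M $ i $ l\<bar> \<le> norm (M *v axis l 1)" by (metis component_le_norm_cart)
    qed
    finally show "norm (M $ i) \<le> (\<Sum>l\<in>UNIV. norm (M *v axis l 1))" by simp
  qed
  also have "\<dots> = (\<Sum>l\<in>UNIV. real CARD('n) * norm (M *v axis l 1))"
    by (simp add: sum_distrib_left)
  finally show ?thesis .
qed

lemma mexp_summable: "summable (\<lambda>k. (1 / fact k) *\<^sub>R matpow (A::real^'n^'n) k)"
proof -
  obtain K where K: "K > 0" "\<And>w. norm (A *v w) \<le> K * norm w" using mv_bounded by blast
  have b: "norm ((1 / fact k) *\<^sub>R matpow A k) \<le> (real CARD('n) * real CARD('n)) * (K^k / fact k)" for k
  proof -
    have "norm (matpow A k) \<le> (\<Sum>l\<in>(UNIV::'n set). real CARD('n) * (K^k))"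
    proof -
      have "norm (matpow A k) \<le> (\<Sum>l\<in>UNIV. real CARD('n) * norm (matpow A k *v axis l 1))"
        by (rule mat_norm_le)
      also have "\<dots> \<le> (\<Sum>l\<in>(UNIV::'n set). real CARD('n) * (K^k))"
        apply (rule sum_mono, rule mult_left_mono)
        using matpow_mv_norm[OF K(2), of k "axis _ 1"] K(1) by simp_all
      finally show ?thesis .
    qed
    then have "norm (matpow A k) \<le> real CARD('n) * real CARD('n) * K^k" by simp
    then show ?thesis by (simp add: divide_right_mono)
  qed
  have "summable (\<lambda>k. (real CARD('n) * real CARD('n)) * (K^k / fact k))"
    using summable_exp[of K] by (intro summable_mult) (simp add: divide_inverse mult.commute)
  then show ?thesis by (rule summable_comparison_test'[where N=0]) (use b in auto)
qed

lemma bl_comp: "bounded_linear (\<lambda>M::real^'n^'n. (M *v v) $ i)"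
proof -
  have "linear (\<lambda>M::real^'n^'n. (M *v v) $ i)"
    by (rule linearI) (simp_all add: matrix_vector_mult_def sum.distrib sum_distrib_left algebra_simps)
  then show ?thesis by (simp add: linear_conv_bounded_linear)
qed

lemma mexp_comp:
  "(mexp (t *\<^sub>R B) *v v) $ i = (\<Sum>k. ((matpow B k *v v) $ i / fact k) * t^k)"
proof -
  have "(mexp (t *\<^sub>R B) *v v) $ i = (\<Sum>k. ((1 / fact k) *\<^sub>R matpow (t *\<^sub>R B) k *v v) $ i)"
    unfolding mexp_def
    by (rule bounded_linear.suminf[OF bl_comp mexp_summable])
  also have "\<dots> = (\<Sum>k. ((matpow B k *v v) $ i / fact k) * t^k)"
    by (simp add: matpow_scale matrix_vector_mult_def sum_distrib_left sum_distrib_right sum_divide_distrib mult_ac)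
  finally show ?thesis .
qed

lemma coef_summable:
  "summable (\<lambda>k. ((matpow (B::real^'n^'n) k *v v) $ i / fact k) * y^k)"
proof -
  obtain K where K: "K > 0" "\<And>w. norm (B *v w) \<le> K * norm w" using mv_bounded by blast
  have "summable (\<lambda>k. norm v * ((K * \<bar>y\<bar>)^k / fact k))"
    using summable_exp[of "K * \<bar>y\<bar>"] by (intro summable_mult) (simp add: divide_inverse mult.commute)
  moreover have "norm (((matpow B k *v v) $ i / fact k) * y^k) \<le> norm v * ((K * \<bar>y\<bar>)^k / fact k)" for k
  proof -
    have "\<bar>(matpow B k *v v) $ i\<bar> \<le> K^k * norm v"
      using component_le_norm_cart matpow_mv_norm[OF K(2)] K(1) order_trans by (metis less_imp_le)
    then have "\<bar>(matpow B k *v v) $ i\<bar> * \<bar>y\<bar>^k \<le> K^k * norm v * \<bar>y\<bar>^k"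
      by (simp add: mult_right_mono)
    then show ?thesis by (simp add: abs_mult power_abs power_mult_distrib divide_right_mono mult_ac)
  qed
  ultimately show ?thesis by (auto intro: summable_comparison_test'[where N=0])
qed

lemma comp_deriv:
  "((\<lambda>t. (mexp (t *\<^sub>R B) *v v) $ i) has_real_derivative (B *v (mexp (t *\<^sub>R B) *v v)) $ i) (at t)"
proof -
  let ?c = "\<lambda>i k. (matpow B k *v v) $ i / fact k"
  have d: "((\<lambda>t. \<Sum>k. ?c i k * t^k) has_real_derivative (\<Sum>k. diffs (?c i) k * t^k)) (at t)"
    by (rule termdiffs_strong_converges_everywhere) (rule coef_summable)
  have e: "diffs (?c i) k * t^k = (\<Sum>l\<in>UNIV. B $ i $ l * (?c l k * t^k))" for k
  proof -
    have "diffs (?c i) k = (matpow B (Suc k) *v v) $ i / fact k"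
      by (simp add: diffs_def divide_simps)
    also have "\<dots> = (B *v (matpow B k *v v)) $ i / fact k"
      by (simp only: matpow_mv_Suc)
    also have "\<dots> = (\<Sum>l\<in>UNIV. B $ i $ l * ?c l k)"
      by (simp add: matrix_vector_mult_def sum_divide_distrib[symmetric])
    finally show ?thesis by (simp add: sum_distrib_left mult_ac)
  qed
  have "(\<Sum>k. diffs (?c i) k * t^k) = (\<Sum>k. (\<Sum>l\<in>UNIV. B $ i $ l * (?c l k * t^k)))"
    by (simp add: e)
  also have "\<dots> = (\<Sum>l\<in>UNIV. (\<Sum>k. B $ i $ l * (?c l k * t^k)))"
    by (rule suminf_sum) (intro summable_mult coef_summable)
  also have "\<dots> = (\<Sum>l\<in>UNIV. B $ i $ l * (\<Sum>k. ?c l k * t^k))"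
    by (intro sum.cong refl suminf_mult coef_summable)
  also have "\<dots> = (B *v (mexp (t *\<^sub>R B) *v v)) $ i"
    by (simp only: mexp_comp[symmetric]) (simp add: matrix_vector_mult_def[of B])
  finally have "(\<Sum>k. diffs (?c i) k * t^k) = (B *v (mexp (t *\<^sub>R B) *v v)) $ i" .
  moreover have "(\<lambda>t. (mexp (t *\<^sub>R B) *v v) $ i) = (\<lambda>t. \<Sum>k. ?c i k * t^k)"
    by (rule ext) (rule mexp_comp)
  ultimately show ?thesis using d by simp
qed

lemma mexp_zero: "mexp (0 *\<^sub>R B) *v v = v"
proof -
  have "(mexp (0 *\<^sub>R B) *v v) $ i = v $ i" for i
  proof -
    have "(mexp (0 *\<^sub>R B) *v v) $ i = (\<Sum>k. ((matpow B k *v v) $ i / fact k) * 0^k)"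
      by (rule mexp_comp)
    also have "\<dots> = v $ i" by (subst powser_zero) simp
    finally show ?thesis .
  qed
  then show ?thesis by (simp add: vec_eq_iff)
qed

lemma skew_inner: assumes "transpose R = - (R::real^'n^'n)" shows "inner w (R *v w) = 0"
proof -
  have "inner w (R *v w) = inner (w v* R) w" by (rule dot_lmul_matrix[symmetric])
  also have "\<dots> = inner (transpose R *v w) w" by simp
  also have "\<dots> = - inner w (R *v w)" using assms by (simp add: mv_neg inner_commute)
  finally show ?thesis by simp
qed

lemma mexp_B1_norm:
  assumes skew: "transpose R = - (R::real^'n^'n)"
  shows "norm (mexp (u *\<^sub>R B1 R) *v v) = exp (-u) * norm v"
proof -
  let ?B = "B1 R"
  let ?G = "\<lambda>t. mexp (t *\<^sub>R ?B) *v v"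
  have Bv: "?B *v w = - (w + R *v w)" for w
    by (simp only: B1_def mv_neg matrix_vector_mult_add_rdistrib matrix_vector_mul_lid)
  have n2: "(norm x)\<^sup>2 = (\<Sum>i\<in>UNIV. (x $ i)\<^sup>2)" for x :: "real^'n"
    unfolding power2_norm_eq_inner inner_vec_def by (simp add: power2_eq_square)
  have dN: "((\<lambda>t. (\<Sum>i\<in>UNIV. (?G t $ i)\<^sup>2)) has_real_derivative (-2) * (\<Sum>i\<in>UNIV. (?G t $ i)\<^sup>2)) (at t)" for t
  proof -
    have "((\<lambda>t. (\<Sum>i\<in>UNIV. (?G t $ i)\<^sup>2)) has_real_derivative (\<Sum>i\<in>UNIV. 2 * ?G t $ i * (?B *v ?G t) $ i)) (at t)"
      by (intro DERIV_sum) (auto intro!: derivative_eq_intros comp_deriv simp: power2_eq_square)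
    moreover have "(\<Sum>i\<in>UNIV. 2 * ?G t $ i * (?B *v ?G t) $ i) = 2 * inner (?G t) (?B *v ?G t)"
      by (simp add: inner_vec_def sum_distrib_left mult_ac)
    moreover have "inner (?G t) (?B *v ?G t) = - (\<Sum>i\<in>UNIV. (?G t $ i)\<^sup>2)"
      using skew_inner[OF skew, of "?G t"] by (simp add: Bv inner_add_right inner_diff_right n2[symmetric] power2_norm_eq_inner)
    ultimately show ?thesis by simp
  qed
  have dP: "((\<lambda>t. (\<Sum>i\<in>UNIV. (?G t $ i)\<^sup>2) * exp (2 * t)) has_real_derivative 0) (at t)" for t
    by (rule dN[THEN DERIV_mult, THEN DERIV_cong]) (auto intro!: derivative_eq_intros)
  have "(\<Sum>i\<in>UNIV. (?G u $ i)\<^sup>2) * exp (2 * u) = (\<Sum>i\<in>UNIV. (?G 0 $ i)\<^sup>2) * exp (2 * 0)"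
    by (rule DERIV_isconst_all) (use dP in blast)
  moreover have z: "mexp 0 *v v = v" using mexp_zero[of ?B v] by simp
  ultimately have "(norm (?G u))\<^sup>2 * exp (2 * u) = (norm v)\<^sup>2"
    by (simp add: n2[symmetric])
  then have "(norm (?G u))\<^sup>2 = (exp (-u) * norm v)\<^sup>2"
    by (simp add: power_mult_distrib exp_minus field_simps power2_eq_square flip: exp_add)
  then show ?thesis by (simp add: power2_eq_iff_nonneg)
qed

lemma dhker_eq:
  fixes R :: "real^'n^'n"
  assumes u: "u > 0"
  shows "dhker R j u x y = hker R u x y *
     (- 2 * inner (mexp (u *\<^sub>R B1 R) *v x - y) (mexp (u *\<^sub>R B1 R) *v axis j 1) / (1 - exp (-2*u)))"
proof -
  define M where "M = mexp (u *\<^sub>R B1 R)"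
  define a where "a = M *v x - y"
  define m where "m = M *v axis j 1"
  define D where "D = 1 - exp (-2*u)"
  have D: "D \<noteq> 0" using u by (simp add: D_def)
  define c where "c = (pi * D) powr (- real CARD('n) / 2)"
  have eq: "hker R u (x + t *\<^sub>R axis j 1) y =
      c * exp (- ((norm a)\<^sup>2 + 2 * t * inner a m + t\<^sup>2 * (norm m)\<^sup>2) / D)" for t
  proof -
    have "M *v (x + t *\<^sub>R axis j 1) - y = a + t *\<^sub>R m"
      by (simp add: a_def m_def matrix_vector_right_distrib matrix_vector_mult_scaleR)
    moreover have "(norm (a + t *\<^sub>R m))\<^sup>2 = (norm a)\<^sup>2 + 2 * t * inner a m + t\<^sup>2 * (norm m)\<^sup>2"
      unfolding power2_norm_eq_inner by (simp add: inner_add_left inner_add_right inner_commute power2_eq_square algebra_simps)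
    ultimately show ?thesis by (simp add: hker_def c_def D_def M_def)
  qed
  have "((\<lambda>t. c * exp (- ((norm a)\<^sup>2 + 2 * t * inner a m + t\<^sup>2 * (norm m)\<^sup>2) / D)) has_real_derivative
        c * exp (- ((norm a)\<^sup>2 + 2 * 0 * inner a m + 0\<^sup>2 * (norm m)\<^sup>2) / D) * (- (2 * inner a m + 2 * 0 * (norm m)\<^sup>2) / D)) (at 0)"
    using D by (auto intro!: derivative_eq_intros simp: field_simps)
  then have "((\<lambda>t. hker R u (x + t *\<^sub>R axis j 1) y) has_real_derivative
        hker R u x y * (- 2 * inner a m / D)) (at 0)"
    using eq[of 0] by (simp add: eq)
  then show ?thesis unfolding dhker_def by (simp add: DERIV_imp_deriv a_def m_def M_def D_def)
qed

lemma gauss_lin: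
  fixes A D s \<beta> :: real
  assumes "A \<ge> 0" "0 < s" "s \<le> D" "\<beta> > 0"
  shows "A / D * exp (- \<beta> * A\<^sup>2 / D) \<le> 1 / (2 * sqrt \<beta>) * s powr (-1/2)"
proof -
  have D: "D > 0" using assms by linarith
  define t where "t = A / sqrt D"
  have t0: "t \<ge> 0" using assms D by (simp add: t_def)
  have "2 * sqrt \<beta> * t \<le> 1 + \<beta> * t\<^sup>2"
  proof -
    have "0 \<le> (1 - sqrt \<beta> * t)\<^sup>2" by simp
    then show ?thesis using assms by (simp add: power2_eq_square algebra_simps real_sqrt_mult_self)
  qed
  also have "\<dots> \<le> exp (\<beta> * t\<^sup>2)" using exp_ge_add_one_self[of "\<beta> * t\<^sup>2"] by simp
  finally have 1: "t * exp (- (\<beta> * t\<^sup>2)) \<le> 1 / (2 * sqrt \<beta>)"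
    using assms by (simp add: exp_minus field_simps)
  have tt: "\<beta> * t\<^sup>2 = \<beta> * A\<^sup>2 / D" using D by (simp add: t_def power_divide)
  have "A / D = t / sqrt D" using D by (simp add: t_def field_simps)
  then have "A / D * exp (- \<beta> * A\<^sup>2 / D) = t * exp (- (\<beta> * t\<^sup>2)) * (1 / sqrt D)"
    using tt by (simp add: field_simps)
  also have "\<dots> \<le> 1 / (2 * sqrt \<beta>) * (1 / sqrt D)"
    using 1 D by (intro mult_right_mono) auto
  also have "\<dots> \<le> 1 / (2 * sqrt \<beta>) * (1 / sqrt s)"
    using assms by (intro mult_left_mono divide_left_mono) auto
  also have "1 / sqrt s = s powr (-1/2)"
    using assms by (simp add: powr_minus_divide powr_half_sqrt[symmetric])
  finally show ?thesis .
qed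

lemma pw_bound:
  fixes H A D s d \<eta> C0 X :: real
  assumes H: "H = (pi*D) powr (-d/2) * exp (- A\<^sup>2 / D)" and A: "A \<ge> 0" and s: "0 < s" "s \<le> D"
    and d: "d \<ge> 0" and \<eta>: "0 < \<eta>" "\<eta> < 1" and C0: "C0 > 0"
    and Hb: "H \<le> C0 * s powr (-d/2) * exp X"
  shows "H * A / D \<le> C0 powr \<eta> / (2 * sqrt (1-\<eta>)) * s powr (-d/2 - 1/2) * exp (\<eta> * X)"
proof -
  have D: "D > 0" using s by linarith
  have Hpos: "H > 0" using D H by simp
  have sp: "H = H powr \<eta> * H powr (1-\<eta>)"
    using Hpos by (simp add: powr_add[symmetric])
  have H1: "H powr (1-\<eta>) = (pi*D) powr (-d*(1-\<eta>)/2) * exp (-(1-\<eta>)*A\<^sup>2/D)"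
    by (simp add: H powr_mult powr_powr exp_powr_real mult_ac) (use D in \<open>simp add: field_simps\<close>)
  have P1: "(pi*D) powr (-d*(1-\<eta>)/2) \<le> s powr (-d*(1-\<eta>)/2)"
  proof (rule powr_mono2')
    show "-d*(1-\<eta>)/2 \<le> 0" using d \<eta> by simp
    show "0 < s" by (rule s)
    have "D \<le> pi * D" using D pi_gt3 by simp
    then show "s \<le> pi * D" using s by linarith
  qed
  have P2: "A/D * exp (-(1-\<eta>)*A\<^sup>2/D) \<le> 1/(2* sqrt(1-\<eta>)) * s powr (-1/2)"
    using gauss_lin[OF A s, of "1-\<eta>"] \<eta> by simp
  have P3: "H powr \<eta> \<le> C0 powr \<eta> * s powr (-d*\<eta>/2) * exp (\<eta>*X)"
  proof -
    have "H powr \<eta> \<le> (C0 * s powr (-d/2) * exp X) powr \<eta>"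
      using Hb Hpos \<eta> by (intro powr_mono2) auto
    also have "\<dots> = C0 powr \<eta> * s powr (-d*\<eta>/2) * exp (\<eta>*X)"
      by (simp add: powr_mult powr_powr exp_powr_real mult_ac)
    finally show ?thesis .
  qed
  have "H * A / D = H powr \<eta> * ((pi*D) powr (-d*(1-\<eta>)/2) * (A/D * exp (-(1-\<eta>)*A\<^sup>2/D)))"
    by (subst sp) (simp add: H1 mult_ac)
  also have "\<dots> \<le> (C0 powr \<eta> * s powr (-d*\<eta>/2) * exp (\<eta>*X)) *
       (s powr (-d*(1-\<eta>)/2) * (1/(2* sqrt(1-\<eta>)) * s powr (-1/2)))"
  proof (rule mult_mono[OF P3])
    show "(pi*D) powr (-d*(1-\<eta>)/2) * (A/D * exp (-(1-\<eta>)*A\<^sup>2/D)) \<le> s powr (-d*(1-\<eta>)/2) * (1/(2 * sqrt(1-\<eta>)) * s powr (-1/2))"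
      by (rule mult_mono[OF P1 P2]) (use A D in auto)
    show "0 \<le> C0 powr \<eta> * s powr (-d*\<eta>/2) * exp (\<eta>*X)" by simp
    show "0 \<le> (pi*D) powr (-d*(1-\<eta>)/2) * (A/D * exp (-(1-\<eta>)*A\<^sup>2/D))" using A D by simp
  qed
  also have "\<dots> = C0 powr \<eta> / (2 * sqrt (1-\<eta>)) * (s powr (-d*\<eta>/2) * s powr (-d*(1-\<eta>)/2) * s powr (-1/2)) * exp (\<eta> * X)"
    by (simp add: field_simps)
  also have "s powr (-d*\<eta>/2) * s powr (-d*(1-\<eta>)/2) * s powr (-1/2) = s powr (-d/2 - 1/2)"
  proof -
    have "s powr (-d*\<eta>/2) * s powr (-d*(1-\<eta>)/2) * s powr (-1/2) = s powr (-d*\<eta>/2 + -d*(1-\<eta>)/2 + -1/2)"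
      by (simp only: powr_add)
    also have "-d*\<eta>/2 + -d*(1-\<eta>)/2 + -1/2 = -d/2 - 1/2" by (simp add: field_simps)
    finally show ?thesis .
  qed
  finally show ?thesis .
qed

definition sfun :: "real \<Rightarrow> real" where "sfun u = (exp u - 1) / (exp u + 1)"

lemma sfun_facts:
  assumes u: "u > 0"
  shows "0 < sfun u" "sfun u < 1" "tau (sfun u) = u" "sfun u \<le> 1 - exp (-2*u)" "sfun u \<le> u"
proof -
  define e where "e = exp u"
  have e: "e > 1" using u by (simp add: e_def)
  show "0 < sfun u" "sfun u < 1" using e by (simp_all add: sfun_def e_def[symmetric] field_simps)
  have "(1 + sfun u) / (1 - sfun u) = e" using e by (simp add: sfun_def e_def[symmetric] field_simps)
  then show "tau (sfun u) = u" by (simp add: tau_def e_def)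
  have ee: "exp (-2*u) = 1 / (e*e)" by (simp add: e_def exp_minus[symmetric] exp_add[symmetric] exp_minus_inverse divide_inverse)
  have "(e - 1) / (e + 1) \<le> 1 - 1 / (e * e)"
  proof -
    have "e \<le> e * e" using e by simp
    then have "1 + e \<le> e * (e * 2)" using e by linarith
    then have "(e - 1) * (e * e) \<le> (e * e - 1) * (e + 1)" using e by (simp add: algebra_simps)
    then show ?thesis using e by (simp add: field_simps)
  qed
  then show "sfun u \<le> 1 - exp (-2*u)" unfolding ee by (simp add: sfun_def e_def[symmetric])
  have "1 - exp (-u) \<le> u" using exp_ge_add_one_self[of "-u"] by simp
  then have 1: "1 - 1 / e \<le> u" by (simp add: e_def exp_minus divide_inverse)
  have "(e - 1) / (e + 1) \<le> 1 - 1 / e" using e by (simp add: field_simps)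
  with 1 show "sfun u \<le> u" unfolding sfun_def e_def[symmetric] by linarith
qed

lemma integrand_bound:
  fixes R :: "real^'n^'n" and x y :: "real^'n"
  assumes skew: "transpose R = - R" and u: "u > 0" and h: "h \<ge> 0"
    and \<eta>: "0 < \<eta>" "\<eta> < 1" and C0: "C0 > 0"
    and hb: "hker R u x y \<le> C0 * sfun u powr (- real CARD('n) / 2) * exp X"
  shows "\<bar>dhker R j u x y\<bar> / sqrt (u + h) \<le>
     C0 powr \<eta> / sqrt (1-\<eta>) * exp (-u) * sfun u powr (- real CARD('n) / 2 - 1) * exp (\<eta> * X)"
proof -
  define s where "s = sfun u"
  define M where "M = mexp (u *\<^sub>R B1 R)"
  define a where "a = M *v x - y"
  define m where "m = M *v axis j 1"
  define D where "D = 1 - exp (-2*u)"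
  define H where "H = hker R u x y"
  define d where "d = real CARD('n)"
  note sf = sfun_facts[OF u, folded s_def]
  have D: "D > 0" using u by (simp add: D_def)
  have nm: "norm m = exp (-u)" using mexp_B1_norm[OF skew, of u "axis j 1"] by (simp add: m_def M_def)
  have Hdef: "H = (pi*D) powr (-d/2) * exp (- (norm a)\<^sup>2 / D)"
    by (simp add: H_def hker_def D_def d_def a_def M_def)
  have Hpos: "H > 0" using D Hdef by simp
  have pw: "H * norm a / D \<le> C0 powr \<eta> / (2 * sqrt (1-\<eta>)) * s powr (-d/2 - 1/2) * exp (\<eta> * X)"
    by (rule pw_bound[OF Hdef _ sf(1) _ _ \<eta> C0]) (use sf hb in \<open>auto simp: D_def d_def H_def s_def\<close>)
  have "\<bar>dhker R j u x y\<bar> = H * (2 * \<bar>inner a m\<bar>) / D"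
    using dhker_eq[OF u, of R j x y] Hpos D
    by (simp add: H_def a_def m_def M_def D_def abs_mult abs_divide)
  also have "\<dots> \<le> H * (2 * (norm a * exp (-u))) / D"
    using Hpos D Cauchy_Schwarz_ineq2[of a m] nm
    by (intro divide_right_mono mult_left_mono) auto
  also have "\<dots> = 2 * exp (-u) * (H * norm a / D)" by simp
  also have "\<dots> \<le> 2 * exp (-u) * (C0 powr \<eta> / (2 * sqrt (1-\<eta>)) * s powr (-d/2 - 1/2) * exp (\<eta> * X))"
    using pw by (intro mult_left_mono) auto
  finally have 1: "\<bar>dhker R j u x y\<bar> \<le> C0 powr \<eta> / sqrt (1-\<eta>) * exp (-u) * s powr (-d/2 - 1/2) * exp (\<eta> * X)"
    by (simp add: mult_ac)
  have "sqrt s \<le> sqrt (u + h)" using sf h by simp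
  then have "\<bar>dhker R j u x y\<bar> / sqrt (u + h) \<le> \<bar>dhker R j u x y\<bar> / sqrt s"
    using sf by (intro divide_left_mono) auto
  also have "\<dots> \<le> C0 powr \<eta> / sqrt (1-\<eta>) * exp (-u) * s powr (-d/2 - 1/2) * exp (\<eta> * X) / sqrt s"
    using 1 sf by (intro divide_right_mono) auto
  also have "\<dots> = C0 powr \<eta> / sqrt (1-\<eta>) * exp (-u) * (s powr (-d/2 - 1/2) * s powr (-1/2)) * exp (\<eta> * X)"
    using sf by (simp add: powr_minus_divide powr_half_sqrt[symmetric])
  also have "s powr (-d/2 - 1/2) * s powr (-1/2) = s powr (-d/2 - 1/2 + -1/2)"
    by (simp only: powr_add)
  also have "-d/2 - 1/2 + -1/2 = -d/2 - 1" by simp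
  finally show ?thesis by (simp add: s_def d_def)
qed

lemma poly_exp_bound:
  fixes y m \<beta> :: real
  assumes "y > 0" "m > 0" "\<beta> > 0"
  shows "y powr m \<le> (m/\<beta>) powr m * exp (\<beta> * y)"
proof -
  have "\<beta> * y / m \<le> exp (\<beta> * y / m)" using exp_ge_add_one_self[of "\<beta> * y / m"] by linarith
  then have "(\<beta> * y / m) powr m \<le> exp (\<beta> * y / m) powr m"
    using assms by (intro powr_mono2) auto
  also have "\<dots> = exp (\<beta> * y)" using assms by (simp add: exp_powr_real)
  finally have "(\<beta>/m) powr m * y powr m \<le> exp (\<beta> * y)"
    using assms by (simp add: powr_mult[symmetric] mult_ac)
  moreover have "(m/\<beta>) powr m * (\<beta>/m) powr m = 1"
    using assms by (simp add: powr_mult[symmetric])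
  ultimately have "y powr m = (m/\<beta>) powr m * ((\<beta>/m) powr m * y powr m)"
    by (simp add: mult.assoc[symmetric])
  also have "\<dots> \<le> (m/\<beta>) powr m * exp (\<beta> * y)"
    using \<open>(\<beta>/m) powr m * y powr m \<le> exp (\<beta> * y)\<close> by (intro mult_left_mono) auto
  finally show ?thesis .
qed

lemma kb:
  fixes \<alpha> k :: real
  assumes \<alpha>: "\<alpha> > 0" and k: "k \<ge> 0"
  obtains M where "M > 0" "\<And>t. t > 0 \<Longrightarrow> t powr (-k) * exp (-\<alpha> * (1-t)\<^sup>2 / t) \<le> M * exp (-\<alpha> * t / 4)"
proof -
  define \<beta> where "\<beta> = \<alpha> / 4"
  define m where "m = k + 1"
  define M where "M = (m/\<beta>) powr m * exp (\<alpha>/8) + 2 powr k * exp (\<alpha>/2) + 1"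
  have \<beta>: "\<beta> > 0" using \<alpha> by (simp add: \<beta>_def)
  have m: "m > 0" using k by (simp add: m_def)
  have Mpos: "M > 0" unfolding M_def by (intro add_nonneg_pos) auto
  have "t powr (-k) * exp (-\<alpha> * (1-t)\<^sup>2 / t) \<le> M * exp (-\<alpha> * t / 4)" if t: "t > 0" for t
  proof (cases "t \<le> 1/2")
    case True
    define y where "y = 1 / t"
    have y: "y \<ge> 2" using True t by (simp add: y_def field_simps)
    have "(1-t)\<^sup>2 / t \<ge> y / 4"
    proof -
      have "(1/2)\<^sup>2 \<le> (1-t)\<^sup>2" using True by (intro power_mono) auto
      then have "(1-t)\<^sup>2 \<ge> 1/4" by (simp add: power2_eq_square)
      then show ?thesis using t by (simp add: y_def field_simps)
    qed
    then have "\<alpha> * (y / 4) \<le> \<alpha> * ((1-t)\<^sup>2 / t)" using \<alpha> by (intro mult_left_mono) auto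
    then have e1: "exp (-\<alpha> * (1-t)\<^sup>2 / t) \<le> exp (- \<beta> * y)"
      by (simp add: \<beta>_def)
    have tp: "t powr (-k) = y powr k" using t by (simp add: y_def powr_minus_divide powr_divide)
    have "y powr k \<le> y powr m" using y by (intro powr_mono) (auto simp: m_def)
    also have "\<dots> \<le> (m/\<beta>) powr m * exp (\<beta> * y)" using y m \<beta> by (intro poly_exp_bound) auto
    finally have "t powr (-k) * exp (-\<alpha> * (1-t)\<^sup>2 / t) \<le> (m/\<beta>) powr m * exp (\<beta> * y) * exp (- \<beta> * y)"
      using tp e1 by (intro mult_mono) auto
    also have "\<dots> = (m/\<beta>) powr m" by (simp add: exp_minus field_simps)
    also have "\<dots> \<le> (m/\<beta>) powr m * exp (\<alpha>/8) * exp (-\<alpha> * t / 4)"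
    proof -
      have "exp (\<alpha>/8) * exp (-\<alpha> * t / 4) = exp (\<alpha>/8 - \<alpha> * t / 4)" by (simp add: exp_add[symmetric])
      moreover have "\<alpha>/8 - \<alpha> * t / 4 \<ge> 0" using True \<alpha> by simp
      ultimately have "exp (\<alpha>/8) * exp (-\<alpha> * t / 4) \<ge> 1" by simp
      then have "(m/\<beta>) powr m * 1 \<le> (m/\<beta>) powr m * (exp (\<alpha>/8) * exp (-\<alpha> * t / 4))"
        by (intro mult_left_mono) auto
      then show ?thesis by (simp add: mult.assoc)
    qed
    also have "\<dots> \<le> M * exp (-\<alpha> * t / 4)" unfolding M_def by (intro mult_right_mono) auto
    finally show ?thesis .
  next
    case False
    show ?thesis
    proof (cases "t \<le> 2")
      case True
      have "t powr (-k) \<le> (1/2) powr (-k)" using False k by (intro powr_mono2') auto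
      also have "\<dots> = 2 powr k" by (simp add: powr_minus_divide powr_divide)
      finally have a: "t powr (-k) \<le> 2 powr k" .
      have b: "exp (-\<alpha> * (1-t)\<^sup>2 / t) \<le> 1" using \<alpha> t by simp
      have "t powr (-k) * exp (-\<alpha> * (1-t)\<^sup>2 / t) \<le> 2 powr k * 1" using a b by (intro mult_mono) auto
      also have "\<dots> \<le> 2 powr k * exp (\<alpha>/2) * exp (-\<alpha> * t / 4)"
      proof -
        have "exp (\<alpha>/2) * exp (-\<alpha> * t / 4) = exp (\<alpha>/2 - \<alpha> * t / 4)" by (simp add: exp_add[symmetric])
        moreover have "\<alpha>/2 - \<alpha> * t / 4 \<ge> 0" using True \<alpha> by simp
        ultimately have "exp (\<alpha>/2) * exp (-\<alpha> * t / 4) \<ge> 1" by simp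
        then have "2 powr k * 1 \<le> 2 powr k * (exp (\<alpha>/2) * exp (-\<alpha> * t / 4))"
          by (intro mult_left_mono) auto
        then show ?thesis by (simp add: mult.assoc)
      qed
      also have "\<dots> \<le> M * exp (-\<alpha> * t / 4)" unfolding M_def by (intro mult_right_mono) auto
      finally show ?thesis .
    next
      case False
      have a: "t powr (-k) \<le> 1" using False k by (simp add: powr_minus_divide ge_one_powr_ge_zero)
      have "(1-t)\<^sup>2 / t \<ge> t / 4"
      proof -
        have "(t/2)\<^sup>2 \<le> (t-1)\<^sup>2" using False by (intro power_mono) auto
        then have "(1-t)\<^sup>2 \<ge> t\<^sup>2 / 4" by (simp add: power2_eq_square algebra_simps)
        then show ?thesis using False by (simp add: field_simps power2_eq_square)
      qed
      then have "\<alpha> * (t / 4) \<le> \<alpha> * ((1-t)\<^sup>2 / t)" using \<alpha> by (intro mult_left_mono) auto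
      then have b: "exp (-\<alpha> * (1-t)\<^sup>2 / t) \<le> exp (-\<alpha> * t / 4)"
        by simp
      have "t powr (-k) * exp (-\<alpha> * (1-t)\<^sup>2 / t) \<le> 1 * exp (-\<alpha> * t / 4)" using a b by (intro mult_mono) auto
      also have "\<dots> \<le> M * exp (-\<alpha> * t / 4)" unfolding M_def by (intro mult_right_mono) auto
      finally show ?thesis .
    qed
  qed
  then show ?thesis using that Mpos by blast
qed

lemma int_exp_le:
  fixes a :: real assumes a: "a > 0"
  shows "(\<integral>\<^sup>+ x. ennreal (exp (-a*x)) * indicator {0<..} x \<partial>lborel) \<le> ennreal (1/a)"
proof -
  have "((\<lambda>x. exp (-a*x)) has_integral exp (-a*0)/a) {0..}"
    by (rule has_integral_exp_minus_to_infinity[OF a])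
  then have "(\<integral>\<^sup>+ x. ennreal (indicator {0..} x * exp (-a*x)) \<partial>lborel) = ennreal (1/a)"
    by (subst nn_integral_has_integral_lebesgue[where I="1/a"]) auto
  moreover have "(\<integral>\<^sup>+ x. ennreal (exp (-a*x)) * indicator {0<..} x \<partial>lborel) \<le>
      (\<integral>\<^sup>+ x. ennreal (indicator {0..} x * exp (-a*x)) \<partial>lborel)"
    by (intro nn_integral_mono) (auto split: split_indicator)
  ultimately show ?thesis by simp
qed

lemma sq_quarter: "0 \<le> (x::real) \<Longrightarrow> x \<le> 1/2 \<Longrightarrow> x\<^sup>2 \<le> 1/4"
  using power_mono[of x "1/2" 2] by (simp add: power2_eq_square)

lemma quarter_pos: "(x::real) \<in> {0..1/2} \<Longrightarrow> 1 - x\<^sup>2 > 0"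
  using sq_quarter[of x] by auto

lemma sfun_tau: assumes "0 \<le> t" "t < 1" shows "sfun (tau t) = t"
proof -
  have e: "exp (tau t) = (1+t)/(1-t)" using assms by (simp add: tau_def)
  have 1: "(1+t)/(1-t) - 1 = 2*t/(1-t)" using assms by (simp add: field_simps)
  have 2: "(1+t)/(1-t) + 1 = 2/(1-t)" using assms by (simp add: field_simps)
  show ?thesis unfolding sfun_def e 1 2 using assms by simp
qed

lemma tau_deriv: assumes "0 \<le> t" "t < 1" shows "(tau has_real_derivative 2 / (1 - t\<^sup>2)) (at t)"
proof -
  have n1: "1 - t \<noteq> 0" "1 + t \<noteq> 0" using assms by auto
  have "((\<lambda>s. (1+s)/(1-s)) has_real_derivative ((1 * (1-t) - (1+t) * (-1)) / ((1-t) * (1-t)))) (at t)"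
    using assms by (intro DERIV_divide) (auto intro!: derivative_eq_intros)
  moreover have "(1 * (1-t) - (1+t) * (-1)) / ((1-t) * (1-t)) = 2 / ((1-t) * (1-t))" by simp
  ultimately have q: "((\<lambda>s. (1+s)/(1-s)) has_real_derivative 2 / ((1-t) * (1-t))) (at t)" by simp
  have pos: "0 < (1+t)/(1-t)" using assms by simp
  have "((\<lambda>s. ln ((1+s)/(1-s))) has_real_derivative inverse ((1+t)/(1-t)) * (2 / ((1-t) * (1-t)))) (at t)"
    by (rule DERIV_chain2[OF DERIV_ln[OF pos] q])
  moreover have "inverse ((1+t)/(1-t)) * (2 / ((1-t) * (1-t))) = 2 / (1 - t\<^sup>2)"
  proof -
    have "inverse ((1+t)/(1-t)) * (2 / ((1-t) * (1-t))) = 2 / ((1+t) * (1-t))"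
      using n1 by (simp add: divide_simps)
    also have "(1+t) * (1-t) = 1 - t\<^sup>2" by (simp add: power2_eq_square algebra_simps)
    finally show ?thesis .
  qed
  ultimately show ?thesis by (simp add: tau_def[abs_def])
qed

lemma subst_bound:
  fixes F :: "real \<Rightarrow> real"
  assumes Fm: "F \<in> borel_measurable borel" and F0: "\<And>t. F t \<ge> 0" and Fz: "F 0 = 0"
  shows "(\<integral>\<^sup>+ u. ennreal (F (sfun u)) * indicator {0..ln 3} u \<partial>lborel) \<le>
         3 * (\<integral>\<^sup>+ t. ennreal (F t) * indicator {0<..} t \<partial>lborel)"
proof -
  have sm: "sfun \<in> borel_measurable borel" unfolding sfun_def by measurable
  have fm: "(\<lambda>u. ennreal (F (sfun u))) \<in> borel_measurable borel"
    using Fm sm by measurable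
  have t0: "tau 0 = 0" by (simp add: tau_def)
  have t1: "tau (1/2) = ln 3" by (simp add: tau_def)
  have "(\<integral>\<^sup>+ u. ennreal (F (sfun u)) * indicator {tau 0..tau (1/2)} u \<partial>lborel) =
        (\<integral>\<^sup>+ t. ennreal (F (sfun (tau t))) * ennreal (2 / (1 - t\<^sup>2)) * indicator {0..1/2} t \<partial>lborel)"
  proof (rule nn_integral_substitution_aux[OF fm])
    show "\<And>x. x \<in> {0..1/2} \<Longrightarrow> (tau has_real_derivative 2 / (1 - x\<^sup>2)) (at x)"
      by (intro tau_deriv) auto
    show "continuous_on {0..1/2::real} (\<lambda>x. 2 / (1 - x\<^sup>2))"
      by (intro continuous_intros) (use quarter_pos in force)
    show "\<And>x. x \<in> {0..1/2::real} \<Longrightarrow> 0 \<le> 2 / (1 - x\<^sup>2)"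
    proof -
      fix x :: real assume "x \<in> {0..1/2}"
      then have "x\<^sup>2 \<le> 1/4" using sq_quarter by auto
      then show "0 \<le> 2 / (1 - x\<^sup>2)" by simp
    qed
  qed auto
  also have "\<dots> \<le> (\<integral>\<^sup>+ t. 3 * (ennreal (F t) * indicator {0<..} t) \<partial>lborel)"
  proof (intro nn_integral_mono)
    fix t :: real
    show "ennreal (F (sfun (tau t))) * ennreal (2 / (1 - t\<^sup>2)) * indicator {0..1/2} t \<le> 3 * (ennreal (F t) * indicator {0<..} t)"
    proof (cases "t \<in> {0<..1/2}")
      case True
      then have st: "sfun (tau t) = t" by (intro sfun_tau) auto
      have "t\<^sup>2 \<le> 1/4" using True sq_quarter by auto
      then have g: "2 / (1 - t\<^sup>2) \<le> 3" by (simp add: field_simps)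
      have "ennreal (F t) * ennreal (2 / (1 - t\<^sup>2)) \<le> ennreal (F t) * ennreal 3"
        using g by (intro mult_left_mono ennreal_leI) auto
      then show ?thesis using True st by (simp add: mult.commute)
    next
      case False
      then have "t \<notin> {0..1/2} \<or> t = 0" by auto
      then show ?thesis
      proof
        assume "t = 0" then show ?thesis using Fz by (simp add: sfun_tau)
      qed simp
    qed
  qed
  also have "\<dots> = 3 * (\<integral>\<^sup>+ t. ennreal (F t) * indicator {0<..} t \<partial>lborel)"
    by (rule nn_integral_cmult) (use Fm in measurable)
  finally show ?thesis by (simp add: t0 t1)
qed

lemma scale_bound:
  fixes a b c0 k M :: real
  assumes a: "a > 0" and b: "b > 0" and ab: "a * b \<ge> 1" and c0: "c0 > 0" and k: "k \<ge> 0"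
    and Mb: "\<And>t. t > 0 \<Longrightarrow> t powr (-k) * exp (-c0 * (1-t)\<^sup>2 / t) \<le> M * exp (-c0 * t / 4)"
    and M: "M > 0"
  shows "(\<integral>\<^sup>+ t. ennreal (t powr (-k) * exp (-c0 * (a - b*t)\<^sup>2 / t)) * indicator {0<..} t \<partial>lborel)
          \<le> ennreal ((a/b) powr (1-k) * M * (4/c0))"
proof -
  define c where "c = a / b"
  have c: "c > 0" using a b by (simp add: c_def)
  define F where "F t = t powr (-k) * exp (-c0 * (a - b*t)\<^sup>2 / t)" for t
  define g where "g t = ennreal (F t * indicator {0<..} t)" for t
  have gm: "g \<in> borel_measurable borel" unfolding g_def F_def by measurable
  have "(\<integral>\<^sup>+ t. ennreal (t powr (-k) * exp (-c0 * (a - b*t)\<^sup>2 / t)) * indicator {0<..} t \<partial>lborel)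
      = (\<integral>\<^sup>+ t. g t \<partial>lborel)"
    by (intro nn_integral_cong) (simp add: g_def F_def split: split_indicator)
  also have "\<dots> = ennreal \<bar>c\<bar> * (\<integral>\<^sup>+ x. g (0 + c * x) \<partial>lborel)"
    using c by (intro nn_integral_real_affine gm) auto
  also have "(\<integral>\<^sup>+ x. g (0 + c * x) \<partial>lborel) \<le>
      (\<integral>\<^sup>+ x. ennreal (c powr (-k) * M) * (ennreal (exp (-(c0/4) * x)) * indicator {0<..} x) \<partial>lborel)"
  proof (intro nn_integral_mono)
    fix x :: real
    show "g (0 + c * x) \<le> ennreal (c powr (-k) * M) * (ennreal (exp (-(c0/4) * x)) * indicator {0<..} x)"
    proof (cases "x > 0")
      case True
      have cx: "c * x > 0" using c True by simp
      have bc: "b * c = a" using b by (simp add: c_def)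
      have "(a - b * (c * x))\<^sup>2 / (c * x) = a * b * ((1-x)\<^sup>2 / x)"
      proof -
        have e1: "b * (c * x) = a * x" using bc by (metis mult.assoc)
        have "a - b * (c * x) = a * (1-x)" unfolding e1 by (simp add: right_diff_distrib)
        then have "(a - b * (c * x))\<^sup>2 = a\<^sup>2 * (1-x)\<^sup>2" by (simp add: power_mult_distrib)
        moreover have "c * x = a * x / b" by (simp add: c_def)
        ultimately have "(a - b * (c * x))\<^sup>2 / (c * x) = a\<^sup>2 * (1-x)\<^sup>2 / (a * x / b)" by simp
        also have "\<dots> = a * b * ((1-x)\<^sup>2 / x)" using a b True by (simp add: power2_eq_square)
        finally show ?thesis .
      qed
      moreover have "(1-x)\<^sup>2 / x \<le> a * b * ((1-x)\<^sup>2 / x)"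
        using ab True mult_right_mono[of 1 "a*b" "(1-x)\<^sup>2 / x"] by simp
      ultimately have "c0 * ((1-x)\<^sup>2 / x) \<le> c0 * ((a - b * (c * x))\<^sup>2 / (c * x))"
        using c0 by (intro mult_left_mono) auto
      then have e: "exp (-c0 * (a - b * (c * x))\<^sup>2 / (c * x)) \<le> exp (-c0 * (1-x)\<^sup>2 / x)" by simp
      have "F (c * x) = c powr (-k) * (x powr (-k) * exp (-c0 * (a - b * (c * x))\<^sup>2 / (c * x)))"
        using c True by (simp add: F_def powr_mult)
      also have "\<dots> \<le> c powr (-k) * (x powr (-k) * exp (-c0 * (1-x)\<^sup>2 / x))"
        using e by (intro mult_left_mono) auto
      also have "\<dots> \<le> c powr (-k) * (M * exp (-c0 * x / 4))"
        using Mb[OF True] by (intro mult_left_mono) auto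
      finally have "F (c * x) \<le> c powr (-k) * M * exp (-(c0/4) * x)" by (simp add: mult_ac)
      moreover have "ennreal (c powr (-k) * M) * (ennreal (exp (-(c0/4) * x)) * indicator {0<..} x) = ennreal (c powr (-k) * M * exp (-(c0/4) * x))"
        using True M by (simp add: ennreal_mult)
      moreover have "g (0 + c * x) = ennreal (F (c * x))" using cx by (simp add: g_def)
      ultimately show ?thesis by (simp add: ennreal_leI)
    next
      case False
      then have "\<not> c * x > 0" using c by (simp add: zero_less_mult_iff)
      then show ?thesis by (simp add: g_def)
    qed
  qed
  also have "\<dots> = ennreal (c powr (-k) * M) * (\<integral>\<^sup>+ x. ennreal (exp (-(c0/4) * x)) * indicator {0<..} x \<partial>lborel)"
    by (rule nn_integral_cmult) measurable
  also have "\<dots> \<le> ennreal (c powr (-k) * M) * ennreal (1 / (c0/4))"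
    using c0 by (intro mult_left_mono int_exp_le) auto
  finally have "(\<integral>\<^sup>+ t. ennreal (t powr (-k) * exp (-c0 * (a - b*t)\<^sup>2 / t)) * indicator {0<..} t \<partial>lborel)
      \<le> ennreal \<bar>c\<bar> * (ennreal (c powr (-k) * M) * ennreal (1 / (c0/4)))"
    by (simp add: mult_left_mono)
  also have "\<dots> = ennreal (c * c powr (-k) * M * (4/c0))"
    using c c0 M by (simp add: ennreal_mult[symmetric] mult_ac)
  also have "c * c powr (-k) = c powr (1-k)"
    using c by (simp add: powr_diff powr_minus_divide)
  finally show ?thesis by (simp add: c_def)
qed

lemma Qs_expand:
  fixes x y :: "real^'n"
  shows "Qs s x y = (norm (x-y))\<^sup>2 + 2* s*((norm x)\<^sup>2 - (norm y)\<^sup>2) + s\<^sup>2 * (norm (x+y))\<^sup>2"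
proof -
  have "(1 + s) *\<^sub>R x - (1 - s) *\<^sub>R y = (x - y) + s *\<^sub>R (x + y)" by (simp add: algebra_simps)
  moreover have "(norm ((x - y) + s *\<^sub>R (x + y)))\<^sup>2 = (norm (x-y))\<^sup>2 + 2* s*inner (x-y) (x+y) + s\<^sup>2 * (norm (x+y))\<^sup>2"
    unfolding power2_norm_eq_inner by (simp add: inner_add_left inner_add_right inner_commute power2_eq_square algebra_simps)
  moreover have "inner (x-y) (x+y) = (norm x)\<^sup>2 - (norm y)\<^sup>2"
    unfolding power2_norm_eq_inner by (simp add: inner_add_left inner_add_right inner_diff_left inner_diff_right inner_commute)
  ultimately show ?thesis by (simp add: Qs_def)
qed

lemma parallelogram:
  fixes x y :: "real^'n"
  shows "(norm (x-y))\<^sup>2 + (norm (x+y))\<^sup>2 = 2 * (norm x)\<^sup>2 + 2 * (norm y)\<^sup>2"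
  unfolding power2_norm_eq_inner by (simp add: inner_add_left inner_add_right inner_diff_left inner_diff_right inner_commute)

lemma expo_a:
  fixes x y :: "real^'n"
  assumes s: "s > 0"
  shows "\<eta> * ((norm x)\<^sup>2 - (norm y)\<^sup>2 - \<delta> / (4 * s) * Qs s x y) =
    (\<eta> * (1 - \<delta>) * (norm x)\<^sup>2 - \<eta> * (norm y)\<^sup>2) -
    \<eta> * \<delta> / 4 * ((norm (x-y))\<^sup>2 / s + s * (norm (x+y))\<^sup>2 - (norm (x-y))\<^sup>2 - (norm (x+y))\<^sup>2)"
proof -
  have pb: "(norm (x+y))\<^sup>2 = 2 * (norm x)\<^sup>2 + 2 * (norm y)\<^sup>2 - (norm (x-y))\<^sup>2"
    using parallelogram[of x y] by simp
  show ?thesis unfolding Qs_expand pb using s by (simp add: field_simps power2_eq_square)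
qed

lemma expo_b:
  fixes x y :: "real^'n"
  assumes s: "s > 0"
  shows "\<eta> * ((norm x)\<^sup>2 - (norm y)\<^sup>2 - \<delta> / (4 * s) * Qs s x y) =
    (\<eta> * (1 - \<delta> / 2) * ((norm x)\<^sup>2 - (norm y)\<^sup>2) - \<eta> * \<delta> / 2 * norm (x + y) * norm (x - y)) -
    \<eta> * \<delta> / 4 * ((norm (x-y) - norm (x+y) * s)\<^sup>2 / s)"
  using s by (simp add: Qs_expand field_simps power2_eq_square)

lemma a_ineq:
  fixes A B s :: real
  assumes "0 < s" "s < 1" "B \<le> A" "1 \<le> A" "0 \<le> B"
  shows "(1-s)\<^sup>2 / s \<le> A / s + s * B - A - B"
proof -
  have "A / s + s * B - A - B - (1-s)\<^sup>2 / s = (1-s) / s * (A - s*B - (1 - s))"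
    using assms by (simp add: field_simps power2_eq_square)
  moreover have "A - s*B - (1-s) \<ge> 0"
  proof -
    have "s * B \<le> s * A" using assms by (intro mult_left_mono) auto
    moreover have "(1-s) * 1 \<le> (1-s) * A" using assms by (intro mult_left_mono) auto
    ultimately show ?thesis by (simp add: algebra_simps)
  qed
  moreover have "(1-s)/s \<ge> 0" using assms by simp
  ultimately show ?thesis by (metis diff_ge_0_iff_ge mult_nonneg_nonneg)
qed

theorem mainTheorem9:
  fixes R :: "real^'n^'n" and p \<delta> h C0 :: real and j :: 'n and E :: "real set"
  assumes skew: "transpose R = - R"
    and p: "1 < p"
    and \<delta>1: "max (1 - 1 / real CARD('n)) (1 - 1 / p) < \<delta>" and \<delta>2: "\<delta> < 1"
    and h: "0 \<le> h"
    and Esub: "E \<subseteq> {0<..}" and Emeas: "E \<in> sets lebesgue"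
    and C0: "0 < C0"
    and bound: "\<And>x y s. 0 < s \<Longrightarrow> s < 1 \<Longrightarrow> tau s \<in> E \<Longrightarrow>
        hker R (tau s) x y \<le> C0 * s powr (- real CARD('n) / 2) *
          exp ((norm x)\<^sup>2 - (norm y)\<^sup>2 - \<delta> / (4 * s) * Qs s x y)"
  shows "(\<forall>\<eta>. 0 < \<eta> \<and> \<eta> < 1 \<longrightarrow> (\<exists>C>0. \<forall>x y. (x, y) \<in> G1 \<and> inner x y < 0 \<longrightarrow>
            Zfun R j E h x y \<le> ennreal (C * exp (\<eta> * (1 - \<delta>) * (norm x)\<^sup>2 - \<eta> * (norm y)\<^sup>2))))
       \<and> (\<forall>\<eta>. 0 < \<eta> \<and> \<eta> < 1 \<and> \<eta> * \<delta> > 1 - 1 / real CARD('n) \<longrightarrow>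
            (\<exists>C>0. \<forall>x y. (x, y) \<in> G1 \<and> inner x y \<ge> 0 \<longrightarrow>
            Zfun R j E h x y \<le> ennreal (C * norm (x + y) ^ CARD('n) *
              exp (\<eta> * (1 - \<delta> / 2) * ((norm x)\<^sup>2 - (norm y)\<^sup>2)
                   - \<eta> * \<delta> / 2 * norm (x + y) * norm (x - y)))))"
proof -
  define d where "d = real CARD('n)"
  have d1: "d \<ge> 1" by (simp add: d_def)
  have \<delta>0: "\<delta> > 0"
  proof -
    have "1 - 1 / real CARD('n) \<ge> 0" by (simp add: field_simps)
    then show ?thesis using \<delta>1 by linarith
  qed
  have Zint: "Zfun R j E h x y = (\<integral>\<^sup>+ u. ennreal (\<bar>dhker R j u x y\<bar> / sqrt (u + h)) * indicator E u \<partial>lborel)" for x y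
    by (simp add: Zfun_def nn_integral_completion)
  have ib: "\<bar>dhker R j u x y\<bar> / sqrt (u + h) \<le>
      C0 powr \<eta> / sqrt (1-\<eta>) * exp (-u) * sfun u powr (-d/2 - 1) *
      exp (\<eta> * ((norm x)\<^sup>2 - (norm y)\<^sup>2 - \<delta> / (4 * sfun u) * Qs (sfun u) x y))"
    if u: "u \<in> E" and \<eta>: "0 < \<eta>" "\<eta> < 1" for u x y \<eta>
  proof -
    have u0: "u > 0" using u Esub by auto
    note sf = sfun_facts[OF u0]
    have "hker R u x y \<le> C0 * sfun u powr (- real CARD('n) / 2) *
          exp ((norm x)\<^sup>2 - (norm y)\<^sup>2 - \<delta> / (4 * sfun u) * Qs (sfun u) x y)"
      using bound[of "sfun u" x y] sf u by simp
    from integrand_bound[OF skew u0 h \<eta> C0 this, of j] show ?thesis by (simp add: d_def)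
  qed
  have sfm: "sfun \<in> borel_measurable borel" unfolding sfun_def by measurable
  show ?thesis
  proof (intro conjI allI impI)
    fix \<eta> :: real assume \<eta>: "0 < \<eta> \<and> \<eta> < 1"
    define \<alpha> where "\<alpha> = \<eta> * \<delta> / 4"
    have \<alpha>: "\<alpha> > 0" using \<eta> \<delta>0 by (simp add: \<alpha>_def)
    obtain M where M: "M > 0" and Mb: "\<And>t. t > 0 \<Longrightarrow> t powr (-(d/2+1)) * exp (-\<alpha> * (1-t)\<^sup>2 / t) \<le> M * exp (-\<alpha> * t / 4)"
      using kb[OF \<alpha>, of "d/2+1"] d1 by auto
    define K where "K = C0 powr \<eta> / sqrt (1-\<eta>)"
    have K: "K > 0" using C0 \<eta> by (simp add: K_def)
    show "\<exists>C>0. \<forall>x y. (x, y) \<in> G1 \<and> inner x y < 0 \<longrightarrow>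
            Zfun R j E h x y \<le> ennreal (C * exp (\<eta> * (1 - \<delta>) * (norm x)\<^sup>2 - \<eta> * (norm y)\<^sup>2))"
    proof (intro exI[of _ "K * M"] conjI allI impI)
      show "K * M > 0" using K M by simp
      fix x y :: "real^'n" assume xy: "(x, y) \<in> G1 \<and> inner x y < 0"
      define Ta where "Ta = \<eta> * (1 - \<delta>) * (norm x)\<^sup>2 - \<eta> * (norm y)\<^sup>2"
      define A where "A = (norm (x-y))\<^sup>2"
      define B where "B = (norm (x+y))\<^sup>2"
      have AB: "B \<le> A"
      proof -
        have "A = (norm x)\<^sup>2 + (norm y)\<^sup>2 - 2 * inner x y" unfolding A_def power2_norm_eq_inner
          by (simp add: inner_diff_left inner_diff_right inner_commute)
        moreover have "B = (norm x)\<^sup>2 + (norm y)\<^sup>2 + 2 * inner x y" unfolding B_def power2_norm_eq_inner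
          by (simp add: inner_add_left inner_add_right inner_commute)
        ultimately show ?thesis using xy by simp
      qed
      have A1: "A \<ge> 1"
      proof (rule ccontr)
        assume "\<not> A \<ge> 1"
        then have "(norm (x-y))\<^sup>2 < 1\<^sup>2" unfolding A_def by simp
        then have a1: "norm (x-y) \<le> 1" using power_less_imp_less_base[of "norm (x-y)" 2 1] by simp
        have "norm (x+y) \<le> norm (x-y)" using AB unfolding A_def B_def by (simp add: power_mono_iff)
        then have "norm (x-y) * norm (x+y) \<le> 1 * 1" using a1 by (intro mult_mono) auto
        then show False using xy a1 by (simp add: G1_def L1_def)
      qed
      have B0: "B \<ge> 0" by (simp add: B_def)
      have pt: "\<bar>dhker R j u x y\<bar> / sqrt (u + h) \<le> K * M * exp Ta * exp (-1 * u)" if u: "u \<in> E" for u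
      proof -
        have u0: "u > 0" using u Esub by auto
        note sf = sfun_facts[OF u0]
        define s where "s = sfun u"
        have s: "0 < s" "s < 1" using sf by (simp_all add: s_def)
        have ex: "\<eta> * ((norm x)\<^sup>2 - (norm y)\<^sup>2 - \<delta> / (4 * s) * Qs s x y) \<le> Ta - \<alpha> * ((1-s)\<^sup>2 / s)"
        proof -
          have "\<alpha> * ((1-s)\<^sup>2 / s) \<le> \<alpha> * (A / s + s * B - A - B)"
            using a_ineq[OF s AB A1 B0] \<alpha> by (intro mult_left_mono) auto
          then show ?thesis using expo_a[OF s(1), of \<eta> x y \<delta>] by (simp add: Ta_def \<alpha>_def A_def B_def)
        qed
        have "s powr (-(d/2+1)) * exp (\<eta> * ((norm x)\<^sup>2 - (norm y)\<^sup>2 - \<delta> / (4 * s) * Qs s x y))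
            \<le> s powr (-(d/2+1)) * (exp (-\<alpha> * (1-s)\<^sup>2 / s) * exp Ta)"
        proof -
          have "exp (\<eta> * ((norm x)\<^sup>2 - (norm y)\<^sup>2 - \<delta> / (4 * s) * Qs s x y)) \<le> exp (Ta - \<alpha> * ((1-s)\<^sup>2 / s))"
            using ex by simp
          also have "\<dots> = exp (-\<alpha> * (1-s)\<^sup>2 / s) * exp Ta" by (simp add: exp_diff exp_minus field_simps)
          finally show ?thesis by (intro mult_left_mono) auto
        qed
        also have "\<dots> \<le> M * exp (-\<alpha> * s / 4) * exp Ta"
          using Mb[OF s(1)] by (simp add: mult.assoc[symmetric] mult_right_mono)
        also have "\<dots> \<le> M * exp Ta" using M \<alpha> s by (simp add: mult_le_cancel_left1)
        finally have 1: "s powr (-(d/2+1)) * exp (\<eta> * ((norm x)\<^sup>2 - (norm y)\<^sup>2 - \<delta> / (4 * s) * Qs s x y)) \<le> M * exp Ta" .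
        have kk: "-d/2 - 1 = -(d/2+1)" by simp
        have "\<bar>dhker R j u x y\<bar> / sqrt (u + h) \<le> K * exp (-u) * (s powr (-(d/2+1)) * exp (\<eta> * ((norm x)\<^sup>2 - (norm y)\<^sup>2 - \<delta> / (4 * s) * Qs s x y)))"
          using ib[OF u, of \<eta> x y] \<eta> unfolding kk by (simp add: K_def s_def mult_ac)
        also have "\<dots> \<le> K * exp (-u) * (M * exp Ta)" using 1 K by (intro mult_left_mono) auto
        finally show ?thesis by (simp add: mult_ac)
      qed
      have "Zfun R j E h x y \<le> (\<integral>\<^sup>+ u. ennreal (K * M * exp Ta) * (ennreal (exp (-1 * u)) * indicator {0<..} u) \<partial>lborel)"
        unfolding Zint
      proof (intro nn_integral_mono)
        fix u
        show "ennreal (\<bar>dhker R j u x y\<bar> / sqrt (u + h)) * indicator E u \<le> ennreal (K * M * exp Ta) * (ennreal (exp (-1 * u)) * indicator {0<..} u)"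
        proof (cases "u \<in> E")
          case True
          then have "u > 0" using Esub by auto
          moreover have "ennreal (\<bar>dhker R j u x y\<bar> / sqrt (u + h)) \<le> ennreal (K * M * exp Ta * exp (-1 * u))"
            using pt[OF True] by (intro ennreal_leI)
          ultimately show ?thesis using True K M by (simp add: ennreal_mult)
        qed simp
      qed
      also have "\<dots> = ennreal (K * M * exp Ta) * (\<integral>\<^sup>+ u. ennreal (exp (-1 * u)) * indicator {0<..} u \<partial>lborel)"
        by (rule nn_integral_cmult) measurable
      also have "\<dots> \<le> ennreal (K * M * exp Ta) * ennreal (1/1)"
        by (intro mult_left_mono int_exp_le) auto
      finally show "Zfun R j E h x y \<le> ennreal (K * M * exp (\<eta> * (1 - \<delta>) * (norm x)\<^sup>2 - \<eta> * (norm y)\<^sup>2))"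
        by (simp add: Ta_def)
    qed
  next
    fix \<eta> :: real assume \<eta>: "0 < \<eta> \<and> \<eta> < 1 \<and> \<eta> * \<delta> > 1 - 1 / real CARD('n)"
    define \<alpha> where "\<alpha> = \<eta> * \<delta> / 4"
    have \<alpha>: "\<alpha> > 0" using \<eta> \<delta>0 by (simp add: \<alpha>_def)
    define k where "k = d/2 + 1"
    have k0: "k \<ge> 0" using d1 by (simp add: k_def)
    obtain M where M: "M > 0" and Mb: "\<And>t. t > 0 \<Longrightarrow> t powr (-k) * exp (-\<alpha> * (1-t)\<^sup>2 / t) \<le> M * exp (-\<alpha> * t / 4)"
      using kb[OF \<alpha> k0] by auto
    define K where "K = C0 powr \<eta> / sqrt (1-\<eta>)"
    have K: "K > 0" using C0 \<eta> by (simp add: K_def)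
    define C where "C = K * (12 * M / \<alpha> + 2 powr k)"
    have "12 * M / \<alpha> > 0" using M \<alpha> by simp
    moreover have "2 powr k > (0::real)" by simp
    ultimately have Cpos: "C > 0" using K unfolding C_def by (intro mult_pos_pos add_pos_pos)
    show "\<exists>C>0. \<forall>x y. (x, y) \<in> G1 \<and> inner x y \<ge> 0 \<longrightarrow>
            Zfun R j E h x y \<le> ennreal (C * norm (x + y) ^ CARD('n) *
              exp (\<eta> * (1 - \<delta> / 2) * ((norm x)\<^sup>2 - (norm y)\<^sup>2)
                   - \<eta> * \<delta> / 2 * norm (x + y) * norm (x - y)))"
    proof (intro exI[of _ C] conjI allI impI Cpos)
      fix x y :: "real^'n" assume xy: "(x, y) \<in> G1 \<and> inner x y \<ge> 0"
      define Tb where "Tb = \<eta> * (1 - \<delta> / 2) * ((norm x)\<^sup>2 - (norm y)\<^sup>2) - \<eta> * \<delta> / 2 * norm (x + y) * norm (x - y)"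
      define a where "a = norm (x-y)"
      define b where "b = norm (x+y)"
      have ab_le: "a \<le> b"
      proof -
        have "a\<^sup>2 = (norm x)\<^sup>2 + (norm y)\<^sup>2 - 2 * inner x y" unfolding a_def power2_norm_eq_inner
          by (simp add: inner_diff_left inner_diff_right inner_commute)
        moreover have "b\<^sup>2 = (norm x)\<^sup>2 + (norm y)\<^sup>2 + 2 * inner x y" unfolding b_def power2_norm_eq_inner
          by (simp add: inner_add_left inner_add_right inner_commute)
        ultimately have "a\<^sup>2 \<le> b\<^sup>2" using xy by simp
        then show ?thesis by (simp add: a_def b_def power_mono_iff)
      qed
      have ab1: "a * b > 1"
      proof (cases "a \<le> 1")
        case True
        then show ?thesis using xy by (simp add: G1_def L1_def a_def b_def mult.commute)
      next
        case False
        then have "1 * 1 < a * b" using ab_le by (intro mult_strict_mono) auto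
        then show ?thesis by simp
      qed
      have "a \<ge> 0" by (simp add: a_def)
      moreover have "a \<noteq> 0" using ab1 by auto
      ultimately have a0: "a > 0" by simp
      have b0: "b > 0" using ab1 ab_le a0 by linarith
      have b1: "b \<ge> 1"
      proof -
        have "a * b \<le> b * b" using ab_le b0 by (intro mult_right_mono) auto
        then have "1 * 1 \<le> b * b" using ab1 by simp
        moreover have "b * b < 1" if "b < 1" using that b0 mult_strict_mono[of b 1 b 1] by auto
        ultimately show ?thesis by linarith
      qed
      define F where "F t = t powr (-k) * exp (-\<alpha> * (a - b*t)\<^sup>2 / t)" for t
      have F0: "F t \<ge> 0" for t by (simp add: F_def)
      have Fz: "F 0 = 0" by (simp add: F_def)
      have Fm: "F \<in> borel_measurable borel" unfolding F_def by measurable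
      have pt: "\<bar>dhker R j u x y\<bar> / sqrt (u + h) \<le> K * exp Tb * (F (sfun u) * indicator {0..ln 3} u + 2 powr k * exp (-1 * u))"
        if u: "u \<in> E" for u
      proof -
        have u0: "u > 0" using u Esub by auto
        note sf = sfun_facts[OF u0]
        define s where "s = sfun u"
        have s: "0 < s" "s < 1" using sf by (simp_all add: s_def)
        have e1: "\<eta> * ((norm x)\<^sup>2 - (norm y)\<^sup>2 - \<delta> / (4 * s) * Qs s x y) = Tb - \<alpha> * ((a - b * s)\<^sup>2 / s)"
          using expo_b[OF s(1), of \<eta> x y \<delta>] unfolding Tb_def \<alpha>_def a_def b_def by simp
        have e2: "-\<alpha> * (a - b * s)\<^sup>2 / s = -(\<alpha> * ((a - b * s)\<^sup>2 / s))" by simp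
        have "exp (\<eta> * ((norm x)\<^sup>2 - (norm y)\<^sup>2 - \<delta> / (4 * s) * Qs s x y)) = exp Tb * exp (-\<alpha> * (a - b * s)\<^sup>2 / s)"
          unfolding e1 e2 by (simp add: exp_diff exp_minus divide_inverse)
        moreover have kk: "-d/2 - 1 = -k" by (simp add: k_def)
        ultimately have 1: "\<bar>dhker R j u x y\<bar> / sqrt (u + h) \<le> K * exp Tb * (exp (-u) * F s)"
          using ib[OF u, of \<eta> x y] \<eta> unfolding kk by (simp add: K_def s_def F_def mult_ac)
        have "exp (-u) * F s \<le> F (sfun u) * indicator {0..ln 3} u + 2 powr k * exp (-1 * u)"
        proof (cases "u \<le> ln 3")
          case True
          then have "exp (-u) * F s \<le> 1 * F s" using u0 F0 by (intro mult_right_mono) auto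
          moreover have "0 \<le> 2 powr k * exp (-u)" by simp
          ultimately have "exp (-u) * F s \<le> F s + 2 powr k * exp (-u)" by linarith
          then show ?thesis using True u0 by (simp add: s_def)
        next
          case False
          have "s > 1/2"
          proof -
            have "ln 3 < u" using False by simp
            then have "exp (ln 3) < exp u" by (simp only: exp_less_cancel_iff)
            then have "exp u > 3" by simp
            then show ?thesis by (simp add: s_def sfun_def field_simps)
          qed
          then have "s powr (-k) \<le> (1/2) powr (-k)" using k0 by (intro powr_mono2') auto
          also have "\<dots> = 2 powr k" by (simp add: powr_minus_divide powr_divide)
          finally have "F s \<le> 2 powr k * 1" unfolding F_def using \<alpha> s by (intro mult_mono) auto
          then have "exp (-u) * F s \<le> exp (-u) * (2 powr k)" by (intro mult_left_mono) auto
          then show ?thesis using False by simp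
        qed
        then have "K * exp Tb * (exp (-u) * F s) \<le> K * exp Tb * (F (sfun u) * indicator {0..ln 3} u + 2 powr k * exp (-1 * u))"
          using K by (intro mult_left_mono) auto
        then show ?thesis by (rule order_trans[OF 1])
      qed
      define Sc where "Sc = (a/b) powr (1-k) * M * (4/\<alpha>)"
      have "Zfun R j E h x y \<le> (\<integral>\<^sup>+ u. ennreal (K * exp Tb) *
          (ennreal (F (sfun u)) * indicator {0..ln 3} u + ennreal (2 powr k) * (ennreal (exp (-1 * u)) * indicator {0<..} u)) \<partial>lborel)"
        unfolding Zint
      proof (intro nn_integral_mono)
        fix u
        show "ennreal (\<bar>dhker R j u x y\<bar> / sqrt (u + h)) * indicator E u \<le> ennreal (K * exp Tb) *
          (ennreal (F (sfun u)) * indicator {0..ln 3} u + ennreal (2 powr k) * (ennreal (exp (-1 * u)) * indicator {0<..} u))"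
        proof (cases "u \<in> E")
          case True
          then have u0: "u > 0" using Esub by auto
          have "ennreal (\<bar>dhker R j u x y\<bar> / sqrt (u + h)) \<le> ennreal (K * exp Tb * (F (sfun u) * indicator {0..ln 3} u + 2 powr k * exp (-1 * u)))"
            using pt[OF True] by (intro ennreal_leI)
          also have "\<dots> = ennreal (K * exp Tb) *
            (ennreal (F (sfun u)) * indicator {0..ln 3} u + ennreal (2 powr k) * (ennreal (exp (-1 * u)) * indicator {0<..} u))"
            using K u0 F0 by (simp add: ennreal_mult ennreal_plus indicator_def)
          finally show ?thesis using True by simp
        qed simp
      qed
      also have "\<dots> = ennreal (K * exp Tb) * ((\<integral>\<^sup>+ u. ennreal (F (sfun u)) * indicator {0..ln 3} u \<partial>lborel) +
           ennreal (2 powr k) * (\<integral>\<^sup>+ u. ennreal (exp (-1 * u)) * indicator {0<..} u \<partial>lborel))"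
      proof -
        have fs[measurable]: "(\<lambda>x. F (sfun x)) \<in> borel_measurable borel" using measurable_compose[OF sfm Fm] by simp
        have m1: "(\<lambda>u. ennreal (F (sfun u)) * indicator {0..ln 3} u) \<in> borel_measurable lborel"
          by measurable
        have m3: "(\<lambda>u. ennreal (exp (-1 * u)) * indicator {0<..} u) \<in> borel_measurable lborel"
          by measurable
        have m2: "(\<lambda>u. ennreal (2 powr k) * (ennreal (exp (-1 * u)) * indicator {0<..} u)) \<in> borel_measurable lborel"
          using m3 by measurable
        have "(\<integral>\<^sup>+ u. ennreal (K * exp Tb) *
          (ennreal (F (sfun u)) * indicator {0..ln 3} u + ennreal (2 powr k) * (ennreal (exp (-1 * u)) * indicator {0<..} u)) \<partial>lborel)
          = ennreal (K * exp Tb) * (\<integral>\<^sup>+ u. (ennreal (F (sfun u)) * indicator {0..ln 3} u + ennreal (2 powr k) * (ennreal (exp (-1 * u)) * indicator {0<..} u)) \<partial>lborel)"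
          using m1 m2 by (intro nn_integral_cmult) measurable
        also have "(\<integral>\<^sup>+ u. (ennreal (F (sfun u)) * indicator {0..ln 3} u + ennreal (2 powr k) * (ennreal (exp (-1 * u)) * indicator {0<..} u)) \<partial>lborel)
          = (\<integral>\<^sup>+ u. ennreal (F (sfun u)) * indicator {0..ln 3} u \<partial>lborel) + (\<integral>\<^sup>+ u. ennreal (2 powr k) * (ennreal (exp (-1 * u)) * indicator {0<..} u) \<partial>lborel)"
          by (rule nn_integral_add[OF m1 m2])
        also have "(\<integral>\<^sup>+ u. ennreal (2 powr k) * (ennreal (exp (-1 * u)) * indicator {0<..} u) \<partial>lborel)
          = ennreal (2 powr k) * (\<integral>\<^sup>+ u. ennreal (exp (-1 * u)) * indicator {0<..} u \<partial>lborel)"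
          by (rule nn_integral_cmult[OF m3])
        finally show ?thesis .
      qed
      also have "\<dots> \<le> ennreal (K * exp Tb) * (3 * ennreal Sc + ennreal (2 powr k) * ennreal (1/1))"
      proof (intro mult_left_mono add_mono)
        have "(\<integral>\<^sup>+ u. ennreal (F (sfun u)) * indicator {0..ln 3} u \<partial>lborel) \<le> 3 * (\<integral>\<^sup>+ t. ennreal (F t) * indicator {0<..} t \<partial>lborel)"
          by (rule subst_bound[OF Fm F0 Fz])
        also have "(\<integral>\<^sup>+ t. ennreal (F t) * indicator {0<..} t \<partial>lborel) \<le> ennreal Sc"
          unfolding F_def Sc_def using scale_bound[OF a0 b0 _ \<alpha> k0 Mb M] ab1 by simp
        finally show "(\<integral>\<^sup>+ u. ennreal (F (sfun u)) * indicator {0..ln 3} u \<partial>lborel) \<le> 3 * ennreal Sc"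
          by (simp add: mult_left_mono)
        show "(\<integral>\<^sup>+ u. ennreal (exp (-1 * u)) * indicator {0<..} u \<partial>lborel) \<le> ennreal (1/1)"
          by (rule int_exp_le) simp
      qed auto
      also have "\<dots> = ennreal (K * exp Tb * (3 * Sc + 2 powr k))"
      proof -
        have Sc0: "Sc \<ge> 0" using M \<alpha> by (simp add: Sc_def)
        have "3 * ennreal Sc + ennreal (2 powr k) * ennreal (1/1) = ennreal (3 * Sc + 2 powr k)"
          using Sc0 by (simp add: ennreal_plus ennreal_mult)
        moreover have "ennreal (K * exp Tb) * ennreal (3 * Sc + 2 powr k) = ennreal (K * exp Tb * (3 * Sc + 2 powr k))"
          using K Sc0 by (simp add: ennreal_mult)
        ultimately show ?thesis by simp
      qed
      also have "\<dots> \<le> ennreal (C * b ^ CARD('n) * exp Tb)"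
      proof (intro ennreal_leI)
        have "(a/b) powr (1-k) \<le> b ^ CARD('n)"
        proof -
          have "(a/b) powr (1-k) = (b/a) powr (d/2)"
            using a0 b0 by (simp add: k_def powr_minus_divide powr_divide)
          also have "\<dots> \<le> (b*b) powr (d/2)"
          proof (rule powr_mono2)
            show "0 \<le> d/2" using d1 by simp
            show "0 \<le> b/a" using a0 b0 by simp
            have "1 \<le> a * b" using ab1 by simp
            then show "b/a \<le> b*b" using a0 b0 by (simp add: field_simps)
          qed
          also have "\<dots> = b powr (d/2) * b powr (d/2)" by (rule powr_mult)
          also have "\<dots> = b powr (d/2 + d/2)" by (rule powr_add[symmetric])
          also have "\<dots> = b powr d" by simp
          also have "\<dots> = b ^ CARD('n)" using b0 by (simp add: d_def powr_realpow)
          finally show ?thesis .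
        qed
        then have "3 * Sc \<le> 3 * (b ^ CARD('n) * M * (4/\<alpha>))"
          unfolding Sc_def using M \<alpha> by (intro mult_left_mono mult_right_mono) auto
        moreover have "3 * (b ^ CARD('n) * M * (4/\<alpha>)) = 12 * M / \<alpha> * b ^ CARD('n)" by simp
        moreover have "2 powr k * 1 \<le> 2 powr k * b ^ CARD('n)" using b1 by (intro mult_left_mono) (simp_all add: one_le_power)
        ultimately have "3 * Sc + 2 powr k \<le> 12 * M / \<alpha> * b ^ CARD('n) + 2 powr k * b ^ CARD('n)"
          by linarith
        then have "3 * Sc + 2 powr k \<le> (12 * M / \<alpha> + 2 powr k) * b ^ CARD('n)"
          by (simp only: distrib_right)
        then have "K * exp Tb * (3 * Sc + 2 powr k) \<le> K * exp Tb * ((12 * M / \<alpha> + 2 powr k) * b ^ CARD('n))"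
          using K by (intro mult_left_mono) auto
        then show "K * exp Tb * (3 * Sc + 2 powr k) \<le> C * b ^ CARD('n) * exp Tb"
          by (simp add: C_def mult_ac)
      qed
      finally show "Zfun R j E h x y \<le> ennreal (C * norm (x + y) ^ CARD('n) *
              exp (\<eta> * (1 - \<delta> / 2) * ((norm x)\<^sup>2 - (norm y)\<^sup>2)
                   - \<eta> * \<delta> / 2 * norm (x + y) * norm (x - y)))"
        by (simp add: Tb_def b_def)
    qed
  qed
qed

end
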